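(* Suppose we have $n\ge2$ agents with additive, identical, normalized valuations, and let $a\in[0,1]$. Suppose the accuracy is $\eta<1-\frac{1-a}{(2n-1)(1+a)}$, i.e., the error between the provided prediction $(p(g_t))_{t\in[T']}$ and the true values $(v(g_t))_{t\in[T]}$ is $D=1-\eta>\frac{1-a}{(2n-1)(1+a)}$. Then any algorithm that computes an exact EFX allocation on the predictions and follows it (allocating each arriving good $g_t$ to the agent that receives $g_t$ in that allocation) while ignoring the true values, is not able to compute an $a$-EFX allocation according to the true valuation, even when $T'=T$.
   Context: Online fair division with predictions and identical valuations: goods $g_1,\dots,g_T$ arrive one per time step; all agents share a true additive normalized valuation $v$ ($v(g_t)\ge0$, $\sum_{t\in[T]}v(g_t)=1$, $v(S)=\sum_{g\in S}v(g)$) and a prediction $p=(p(g_1),\dots,p(g_{T'}))$, an additive normalized valuation over $T'$ predicted goods. The error is $D=\frac12\sum_{t=1}^{\max\{T,T'\}}|p(g_t)-v(g_t)|$ (missing entries set to $0$), and the accuracy is $\eta=1-D$. For $S\ne\emptyset$ and valuation $f$, $\bar S^f=S\setminus\{g\}$ with $g\in\arg\max_{g'\in S}f(S\setminus\{g'\})$, $\bar\emptyset^f=\emptyset$. An allocation $(A_1,\dots,A_n)$ is $a$-EFX with respect to $f$ if $f(A_i)\ge a\cdot f(\bar{A_j}^f)$ for all $i,j$; exact EFX means $1$-EFX. *)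

theory Defs
  imports Complex_Main
begin

text \<open>Goods are indexed by natural numbers 0,...,T-1 (g_{t+1} is index t);
  agents by 0,...,n-1. A valuation on T goods is a function nat => real,
  only its values below T matter; f(S) = sum f S.\<close>

definition normalized :: "nat \<Rightarrow> (nat \<Rightarrow> real) \<Rightarrow> bool" where
  "normalized T f \<longleftrightarrow> (\<forall>t<T. 0 \<le> f t) \<and> (\<Sum>t<T. f t) = 1"

definition pred_error :: "nat \<Rightarrow> (nat \<Rightarrow> real) \<Rightarrow> nat \<Rightarrow> (nat \<Rightarrow> real) \<Rightarrow> real" where
  "pred_error T v T' p =
     (1/2) * (\<Sum>t<max T T'. \<bar>(if t < T' then p t else 0) - (if t < T then v t else 0)\<bar>)"

definition bar :: "(nat \<Rightarrow> real) \<Rightarrow> nat set \<Rightarrow> nat set" where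
  "bar f S = (if S = {} then {}
              else S - {SOME g. g \<in> S \<and> (\<forall>g'\<in>S. sum f (S - {g'}) \<le> sum f (S - {g}))})"

definition is_alloc :: "nat \<Rightarrow> nat \<Rightarrow> (nat \<Rightarrow> nat set) \<Rightarrow> bool" where
  "is_alloc n T A \<longleftrightarrow> (\<forall>i<n. A i \<subseteq> {..<T})
      \<and> (\<forall>i<n. \<forall>j<n. i \<noteq> j \<longrightarrow> A i \<inter> A j = {})
      \<and> (\<Union>i<n. A i) = {..<T}"

definition is_aEFX :: "real \<Rightarrow> (nat \<Rightarrow> real) \<Rightarrow> nat \<Rightarrow> (nat \<Rightarrow> nat set) \<Rightarrow> bool" where
  "is_aEFX a f n A \<longleftrightarrow> (\<forall>i<n. \<forall>j<n. sum f (A i) \<ge> a * sum f (bar f (A j)))"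

end

theory Submission
  imports Defs
begin


lemma bar_ge:
  assumes fin: "finite S" and xS: "x \<in> S" and yS: "y \<in> S" and xy: "x \<noteq> y"
    and nn: "\<forall>t\<in>S. 0 \<le> f t"
  shows "f x \<le> sum f (bar f S)"
proof -
  have ne: "S \<noteq> {}" using xS by auto
  let ?h = "\<lambda>g. sum f (S - {g})"
  have "Max (?h ` S) \<in> ?h ` S" using fin ne by (intro Max_in) auto
  then obtain g where gS: "g \<in> S" and gm: "?h g = Max (?h ` S)" by auto
  have "\<forall>g'\<in>S. ?h g' \<le> ?h g" using gm fin by (simp add: Max_ge)
  then have ex: "\<exists>g. g \<in> S \<and> (\<forall>g'\<in>S. ?h g' \<le> ?h g)" using gS by blast
  define g1 where "g1 = (SOME g. g \<in> S \<and> (\<forall>g'\<in>S. ?h g' \<le> ?h g))"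
  have g1: "g1 \<in> S \<and> (\<forall>g'\<in>S. ?h g' \<le> ?h g1)"
    unfolding g1_def using someI_ex[OF ex] by blast
  have b: "bar f S = S - {g1}" unfolding bar_def g1_def using ne by simp
  have "f x \<le> ?h y"
    using xS xy fin nn by (intro member_le_sum) auto
  also have "\<dots> \<le> ?h g1" using g1 yS by blast
  finally show ?thesis using b by simp
qed

lemma sum3:
  assumes "finite S" "g \<in> S" "x \<in> S" "g \<noteq> x"
  shows "(\<Sum>t\<in>S. if t = g then A else if t = x then B else (C::real))
         = A + B + (real (card S) - 2) * C"
proof -
  let ?f = "\<lambda>t. if t = g then A else if t = x then B else (C::real)"
  have c2: "card S \<ge> 2"
  proof -
    have "card {g, x} \<le> card S" using assms by (intro card_mono) auto
    then show ?thesis using assms by simp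
  qed
  have "sum ?f S = ?f g + sum ?f (S - {g})" using assms by (simp add: sum.remove)
  also have "sum ?f (S - {g}) = ?f x + sum ?f (S - {g} - {x})"
    using assms by (intro sum.remove) auto
  also have "sum ?f (S - {g} - {x}) = sum (\<lambda>_. C) (S - {g} - {x})"
    by (intro sum.cong) auto
  also have "\<dots> = real (card (S - {g} - {x})) * C" by simp
  also have "card (S - {g} - {x}) = card S - 2" using assms by (simp add: card_Diff_singleton_if)
  finally show ?thesis using c2 assms(4) by (simp add: of_nat_diff)
qed



lemma two_elems:
  assumes "2 \<le> card S"
  obtains x y where "x \<in> S" "y \<in> S" "x \<noteq> y"
proof -
  have "S \<noteq> {}" using assms by auto
  then obtain x where x: "x \<in> S" by auto
  have "finite S" using assms card.infinite by fastforce
  then have "card (S - {x}) \<ge> 1" using assms x by (simp add: card_Diff_singleton)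
  then have "S - {x} \<noteq> {}" by (metis card.empty not_one_le_zero)
  then obtain y where "y \<in> S - {x}" by blast
  then show ?thesis using that x by auto
qed

lemma caseU:
  assumes n2: "n \<ge> 2" and a0: "0 < a" and a1: "a \<le> 1"
    and Dlow: "(1 - a) / ((2 * real n - 1) * (1 + a)) < D"
    and Dhi: "D \<le> 1 - 1 / (2 * real n - 1)"
    and al: "is_alloc n (2*n-1) A"
  shows "\<exists>v. normalized (2*n-1) v \<and> pred_error (2*n-1) v (2*n-1) (\<lambda>t. 1 / real (2*n-1)) = D
            \<and> \<not> is_aEFX a v n A"
proof -
  define m where "m = 2*n - 1"
  have m3: "m \<ge> 3" using n2 unfolding m_def by simp
  have rm: "real m = 2 * real n - 1" using n2 unfolding m_def by (simp add: of_nat_diff)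
  have sub: "\<forall>i<n. A i \<subseteq> {..<m}" and disj: "\<forall>i<n. \<forall>j<n. i \<noteq> j \<longrightarrow> A i \<inter> A j = {}"
    and un: "(\<Union>i<n. A i) = {..<m}" using al unfolding is_alloc_def m_def by auto
  have fin: "\<And>i. i < n \<Longrightarrow> finite (A i)" using sub finite_subset by blast
  have "card (\<Union>i<n. A i) = (\<Sum>i<n. card (A i))"
    using fin disj by (intro card_UN_disjoint) auto
  then have cs: "(\<Sum>i<n. card (A i)) = m" using un by simp
  obtain i where i: "i < n" "card (A i) \<le> 1"
  proof (rule ccontr)
    assume "\<not> thesis"
    then have "\<forall>i<n. 2 \<le> card (A i)" using that by force
    then have "(\<Sum>i<n. (2::nat)) \<le> (\<Sum>i<n. card (A i))" by (intro sum_mono) auto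
    then show False using cs m_def n2 by simp
  qed
  obtain j where j: "j < n" "2 \<le> card (A j)"
  proof (rule ccontr)
    assume "\<not> thesis"
    then have "\<forall>i<n. card (A i) \<le> 1" using that by force
    then have "(\<Sum>i<n. card (A i)) \<le> (\<Sum>i<n. (1::nat))" by (intro sum_mono) auto
    then show False using cs m_def n2 by simp
  qed
  have ij: "i \<noteq> j" using i j by auto
  obtain x y where xy: "x \<in> A j" "y \<in> A j" "x \<noteq> y" using two_elems[OF j(2)] by blast
  have xm: "x < m" and ym: "y < m" using xy sub j by auto
  obtain g0 where g0: "g0 < m" "g0 \<noteq> x" "A i \<subseteq> {g0}"
  proof (cases "A i = {}")
    case True then show ?thesis using that[of y] ym xy by auto
  next
    case False
    then have "card (A i) = 1" using i fin by (simp add: Suc_le_eq card_gt_0_iff le_antisym)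
    then obtain g where g: "A i = {g}" by (auto simp: card_Suc_eq)
    have "g < m" using g sub i by auto
    moreover have "g \<noteq> x" using g xy disj i j ij by blast
    ultimately show ?thesis using that[of g] g by auto
  qed
  define r where "r = min D (1 / real m)"
  define s where "s = (D - r) / (real m - 2)"
  define v where "v = (\<lambda>t. if t = g0 then 1 / real m - r else if t = x then 1 / real m + D else 1 / real m - s)"
  have Dpos: "D > 0"
  proof -
    have "(2 * real n - 1) * (1 + a) > 0" using n2 a0 by (simp add: add_pos_pos)
    moreover have "1 - a \<ge> 0" using a1 by simp
    ultimately have "(1 - a) / ((2 * real n - 1) * (1 + a)) \<ge> 0" by simp
    then show ?thesis using Dlow by linarith
  qed
  have mpos: "real m > 2" using m3 by simp
  have r0: "r \<ge> 0" "r \<le> D" "r \<le> 1 / real m" using Dpos mpos unfolding r_def by auto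
  have s0: "s \<ge> 0" using r0 mpos unfolding s_def by simp
  have ms: "(real m - 2) * s = D - r" using mpos unfolding s_def by simp
  have s1: "s \<le> 1 / real m"
  proof (cases "D \<le> 1 / real m")
    case True then have "r = D" unfolding r_def by simp
    then show ?thesis using s_def mpos by simp
  next
    case False then have rr: "r = 1 / real m" unfolding r_def by simp
    have e: "(real m - 2) / real m = 1 - 2 / real m" using mpos by (simp add: field_simps)
    have "D \<le> 1 - 1 / real m" using Dhi rm by simp
    then have "D - 1 / real m \<le> (real m - 2) / real m" unfolding e by simp
    then have "D - r \<le> 1 / real m * (real m - 2)" using rr by simp
    then have "(D - r) / (real m - 2) \<le> 1 / real m" using mpos
      by (subst pos_divide_le_eq) auto
    then show ?thesis unfolding s_def .
  qed
  have vnn: "\<forall>t. 0 \<le> v t" using r0 s1 mpos Dpos unfolding v_def by auto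
  have mS: "m \<in> {..<m} \<Longrightarrow> False" by simp
  have norm: "normalized m v"
  proof -
    have "(\<Sum>t<m. v t) = (1 / real m - r) + (1 / real m + D) + (real m - 2) * (1 / real m - s)"
      unfolding v_def using g0 xm by (subst sum3) auto
    also have "\<dots> = 1" using ms mpos by (simp add: algebra_simps)
    finally show ?thesis unfolding normalized_def using vnn by simp
  qed
  have err: "pred_error m v m (\<lambda>t. 1 / real m) = D"
  proof -
    have "(\<Sum>t<max m m. \<bar>(if t < m then 1 / real m else 0) - (if t < m then v t else 0)\<bar>)
        = (\<Sum>t<m. if t = g0 then r else if t = x then D else s)"
      using r0 s0 Dpos by (intro sum.cong) (auto simp: v_def)
    also have "\<dots> = r + D + (real m - 2) * s"
      using g0 xm by (subst sum3) auto
    also have "\<dots> = 2 * D" using ms by simp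
    finally show ?thesis unfolding pred_error_def by simp
  qed
  have lt: "v g0 < a * v x"
  proof (cases "D \<le> 1 / real m")
    case True then have rr: "r = D" unfolding r_def by simp
    have pos: "real m * (1 + a) > 0" using mpos a0 by simp
    have "(1 - a) / (real m * (1 + a)) < D" using Dlow rm by simp
    then have "1 - a < D * (real m * (1 + a))" using pos by (simp add: divide_less_eq)
    then have "(1 - a) / real m < D * (1 + a)" using mpos
      by (subst pos_divide_less_eq) (auto simp: algebra_simps)
    moreover have "1 / real m - D - a * (1 / real m + D) = (1 - a) / real m - D * (1 + a)"
      by (simp add: algebra_simps diff_divide_distrib)
    ultimately have "1 / real m - D < a * (1 / real m + D)" by linarith
    then show ?thesis unfolding v_def rr using g0 by simp
  next
    case False then have rr: "r = 1 / real m" unfolding r_def by simp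
    have "0 < 1 / real m + D" using Dpos mpos by (simp add: add_pos_pos)
    then have "0 < a * (1 / real m + D)" using a0 by simp
    then show ?thesis unfolding v_def rr using g0 by simp
  qed
  have "sum v (A i) \<le> sum v {g0}" using g0 vnn by (intro sum_mono2) auto
  also have "\<dots> < a * v x" using lt by simp
  also have "\<dots> \<le> a * sum v (bar v (A j))"
    using bar_ge[OF fin[OF j(1)] xy] vnn a0 by (intro mult_left_mono) auto
  finally have "\<not> is_aEFX a v n A" unfolding is_aEFX_def using i j by force
  then show ?thesis using norm err unfolding m_def by blast
qed



lemma caseZ:
  assumes n2: "n \<ge> 2" and a0: "0 < a"
    and Dlo: "1 - 1 / real n \<le> D" and D1: "D \<le> 1"
    and al: "is_alloc n (n+1) A" and ef: "is_aEFX 1 p n A"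
    and p_def: "p = (\<lambda>t. if t < n then 1 / real n else 0)"
  shows "\<exists>v. normalized (n+1) v \<and> pred_error (n+1) v (n+1) p = D \<and> \<not> is_aEFX a v n A"
proof -
  have sub: "\<forall>i<n. A i \<subseteq> {..<n+1}" and disj: "\<forall>i<n. \<forall>j<n. i \<noteq> j \<longrightarrow> A i \<inter> A j = {}"
    and un: "(\<Union>i<n. A i) = {..<n+1}" using al unfolding is_alloc_def by auto
  have fin: "\<And>i. i < n \<Longrightarrow> finite (A i)" using sub finite_subset by blast
  have npos: "real n \<ge> 2" using n2 by simp
  have pnn: "\<forall>t. 0 \<le> p t" unfolding p_def by simp
  have "n \<in> (\<Union>i<n. A i)" using un by simp
  then obtain j where j: "j < n" "n \<in> A j" by auto
  have "\<exists>h\<in>A j. h < n"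
  proof (rule ccontr)
    assume nh: "\<not> ?thesis"
    have pj: "sum p (A j) = 0" using nh unfolding p_def by (intro sum.neutral) auto
    have own: "\<forall>t<n. \<exists>k<n. t \<in> A k" using un by auto
    define ow where "ow t = (SOME k. k < n \<and> t \<in> A k)" for t
    have ow: "\<And>t. t < n \<Longrightarrow> ow t < n \<and> t \<in> A (ow t)"
    proof -
      fix t assume "t < n"
      then have "\<exists>k. k < n \<and> t \<in> A k" using own by blast
      then show "ow t < n \<and> t \<in> A (ow t)" unfolding ow_def by (rule someI_ex)
    qed
    have owj: "\<And>t. t < n \<Longrightarrow> ow t \<noteq> j" using ow nh by blast
    have "ow ` {..<n} \<subseteq> {..<n} - {j}" using ow owj by auto
    then have "card (ow ` {..<n}) \<le> card ({..<n} - {j})" by (intro card_mono) auto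
    also have "\<dots> = n - 1" using j by simp
    finally have cl: "card (ow ` {..<n}) < n" using n2 by simp
    have "\<not> inj_on ow {..<n}"
    proof
      assume "inj_on ow {..<n}"
      then have "card (ow ` {..<n}) = n" by (simp add: card_image)
      then show False using cl by simp
    qed
    then obtain t1 t2 where t: "t1 < n" "t2 < n" "t1 \<noteq> t2" "ow t1 = ow t2"
      unfolding inj_on_def by auto
    define k where "k = ow t1"
    have k: "k < n" "t1 \<in> A k" "t2 \<in> A k" using ow[OF t(1)] ow[OF t(2)] t(4) unfolding k_def by auto
    have "p t1 \<le> sum p (bar p (A k))" using bar_ge[OF fin[OF k(1)] k(2,3) t(3)] pnn by auto
    also have "\<dots> \<le> sum p (A j)" using ef k j unfolding is_aEFX_def by auto
    finally show False using pj t(1) npos unfolding p_def by simp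
  qed
  then obtain h where h: "h \<in> A j" "h < n" by blast
  define i where "i = (if j = 0 then 1 else 0::nat)"
  have i: "i < n" "i \<noteq> j" using n2 unfolding i_def by auto
  define v where "v = (\<lambda>t. if t = h then 1 - D else if t = n then D else (0::real))"
  have "1 / real n \<le> 1 / 2" using npos by (simp add: divide_le_eq)
  then have D0: "D > 0" using Dlo by linarith
  have vnn: "\<forall>t. 0 \<le> v t" using D0 D1 unfolding v_def by auto
  have norm: "normalized (n+1) v"
  proof -
    have "(\<Sum>t<n+1. v t) = (1 - D) + D + (real (n+1) - 2) * 0"
      unfolding v_def using h by (subst sum3) auto
    then show ?thesis unfolding normalized_def using vnn by simp
  qed
  have err: "pred_error (n+1) v (n+1) p = D"
  proof -
    have hh: "\<bar>1 / real n - (1 - D)\<bar> = D - 1 + 1 / real n" using Dlo by simp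
    have "(\<Sum>t<max (n+1) (n+1). \<bar>(if t < n+1 then p t else 0) - (if t < n+1 then v t else 0)\<bar>)
        = (\<Sum>t<n+1. if t = h then D - 1 + 1 / real n else if t = n then D else 1 / real n)"
      using D0 h hh by (intro sum.cong) (auto simp: v_def p_def)
    also have "\<dots> = (D - 1 + 1 / real n) + D + (real (n+1) - 2) * (1 / real n)"
      using h by (subst sum3) auto
    also have "(real (n+1) - 2) * (1 / real n) = 1 - 1 / real n"
      using npos by (simp add: field_simps)
    finally show ?thesis unfolding pred_error_def by simp
  qed
  have "sum v (A i) = 0"
  proof (intro sum.neutral ballI)
    fix t assume "t \<in> A i"
    then have "t \<notin> A j" using disj i j by blast
    then show "v t = 0" using h j unfolding v_def by auto
  qed
  moreover have "D \<le> sum v (bar v (A j))"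
  proof -
    have "v n \<le> sum v (bar v (A j))" using bar_ge[OF fin[OF j(1)] j(2) h(1), of v] vnn h by auto
    moreover have "v n = D" using h unfolding v_def by simp
    ultimately show ?thesis by simp
  qed
  moreover have "a * D > 0" using a0 D0 by simp
  moreover have "a * D \<le> a * sum v (bar v (A j))" using calculation(2) a0 by (simp add: mult_left_mono)
  ultimately have "sum v (A i) < a * sum v (bar v (A j))" by linarith
  then have "\<not> is_aEFX a v n A" unfolding is_aEFX_def using i j by force
  then show ?thesis using norm err by blast
qed

theorem proposition4p3:
  fixes n :: nat and a D :: real
    and ALG :: "nat \<Rightarrow> (nat \<Rightarrow> real) \<Rightarrow> nat \<Rightarrow> nat set"
  assumes "n \<ge> 2"
    and "0 < a" and "a \<le> 1"
    and "(1 - a) / ((2 * real n - 1) * (1 + a)) < D" and "D \<le> 1"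
    and ALG_EFX: "\<forall>T' p. normalized T' p \<longrightarrow>
                    is_alloc n T' (ALG T' p) \<and> is_aEFX 1 p n (ALG T' p)"
  shows "\<exists>T v p. T > 0 \<and> normalized T v \<and> normalized T p
           \<and> pred_error T v T p = D
           \<and> \<not> is_aEFX a v n (ALG T p)"
proof (cases "D \<le> 1 - 1 / (2 * real n - 1)")
  case True
  define m where "m = 2 * n - 1"
  define p where "p = (\<lambda>t::nat. 1 / real m)"
  have m0: "m > 0" using assms(1) unfolding m_def by simp
  have pn: "normalized m p" unfolding normalized_def p_def using m0 by simp
  have "is_alloc n m (ALG m p)" using ALG_EFX pn by simp
  then have "is_alloc n (2*n-1) (ALG (2*n-1) (\<lambda>t. 1 / real (2*n-1)))" unfolding m_def p_def .
  from caseU[OF assms(1,2,3,4) True this] obtain v where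
    "normalized (2*n-1) v \<and> pred_error (2*n-1) v (2*n-1) (\<lambda>t. 1 / real (2*n-1)) = D \<and> \<not> is_aEFX a v n (ALG (2*n-1) (\<lambda>t. 1 / real (2*n-1)))"
    by blast
  then have "normalized m v \<and> pred_error m v m p = D \<and> \<not> is_aEFX a v n (ALG m p)"
    unfolding m_def p_def .
  then show ?thesis using m0 pn by (intro exI[of _ m] exI[of _ v] exI[of _ p]) simp
next
  case False
  define p where "p = (\<lambda>t. if t < n then 1 / real n else (0::real))"
  have npos: "real n \<ge> 2" using assms(1) by simp
  have pn: "normalized (n+1) p"
  proof -
    have "(\<Sum>t<n+1. p t) = (\<Sum>t<n. p t) + p n" by simp
    also have "(\<Sum>t<n. p t) = (\<Sum>t<n. 1 / real n)" unfolding p_def by (intro sum.cong) auto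
    also have "\<dots> = 1" using npos by simp
    finally show ?thesis unfolding normalized_def p_def by simp
  qed
  have al: "is_alloc n (n+1) (ALG (n+1) p)" and ef: "is_aEFX 1 p n (ALG (n+1) p)"
    using ALG_EFX pn by simp_all
  have "1 / (2 * real n - 1) \<le> 1 / real n" using npos by (intro divide_left_mono) auto
  then have "1 - 1 / real n \<le> D" using False by linarith
  from caseZ[OF assms(1,2) this assms(5) al ef p_def] obtain v where
    "normalized (n+1) v \<and> pred_error (n+1) v (n+1) p = D \<and> \<not> is_aEFX a v n (ALG (n+1) p)"
    by blast
  then show ?thesis using pn by (intro exI[of _ "n+1"] exI[of _ v] exI[of _ p]) simp
qed

end
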